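(* Let $q\in(0,1]$, $\eta\in(0,1]$ and $m>0$. Suppose that $\sup_{T\in\mathbb T}E[|\hat u_T|^m]<\infty$ where $\hat u_T=a_T^{-1}(\hat\theta_T-\theta^* )$, and assume [A5]: there exists $\lambda>0$ with $\lim_{x\to0}p(x)/|x|^q=\lambda$. Then for every $R>0$ and $m_0>0$ there exists a constant $D_{m,m_0,R}>0$ such that $$P\bigl(\{j:\hat\theta_{T,j}=0\}\ne\mathcal J^{(0)}\bigr)<D_{m,m_0,R}\bigl(\|a_T\|^{m\eta}+c_T(m_0,R)\bigr)$$ for every $T\in\mathbb T$.
   Context: Let $\Theta\subset\mathbb R^{\mathsf p}$ be a bounded open set with closure $\overline\Theta$ and $\theta^*\in\Theta$. Let $(\Omega,\mathcal F,P)$ be a probability space, $\mathbb T\subset\mathbb R_{\ge0}$ with $\sup\mathbb T=\infty$. For each $T\in\mathbb T$, $\mathbb H_T:\Omega\times\overline\Theta\to\mathbb R$ is a random field continuous in $\theta$ for every $\omega$. The penalty is $p_T(\theta)=\sum_{j=1}^{\mathsf p}\xi_T^jp(\theta_j)$ with (possibly random) $\xi_T^j>0$ and $p:\mathbb R\to\mathbb R_{\ge0}$, $p(0)=0$; $\mathbb H^\dagger_T=\mathbb H_T-p_T$, and $\hat\theta_T:\Omega\to\overline\Theta$ is measurable with $\mathbb H^\dagger_T(\hat\theta_T)=\max_{\overline\Theta}\mathbb H^\dagger_T$. $\mathcal J^{(0)}=\{j:\theta^*_j=0\}$, $\mathcal J^{(1)}=\{j:\theta^*_j\ne0\}$; $A^{(00)}=(A_{ij})_{i,j\in\mathcal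 J^{(0)}}$. $a_T=\mathrm{diag}(\alpha_T^1,\dots,\alpha_T^{\mathsf p})$ is deterministic, invertible, with $\|a_T\|\to0$ ($\|\cdot\|$ spectral norm); $\mathbb U_T=\{u:\theta^*+a_Tu\in\overline\Theta\}$. $\tilde a_T$ is diagonal with $(\tilde a_T)_{jj}=(\xi_T^j)^{-1/q}$ for $j\in\mathcal J^{(0)}$ and $\alpha_T^j$ for $j\in\mathcal J^{(1)}$; $G_T=a_T^{-1}\tilde a_T$. For $R>0$, $\mathsf c_{T,R}=\sup\frac{|\mathbb H_T(\theta^*+a_Tu)-\mathbb H_T(\theta^*+a_Tv)|}{|u-v|^q}$ over $u,v\in\mathbb U_T$, $u\ne v$, $|a_Tu|,|a_Tv|<R\|a_T\|^{1-\eta}$; for $m_0>0$, $c_T(m_0,R)=E[|\mathsf c_{T,R}|^{m_0}\|G_T^{(00)}\|^{qm_0}]$ (possibly $\infty$). *)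

theory Defs
  imports "HOL-Probability.Probability"
begin

text \<open>Diagonal matrices \<open>diag(d_1,...,d_p)\<close> are represented by their diagonal
  \<open>d :: 'p \<Rightarrow> real\<close>.  Action of the diagonal matrix on a vector.\<close>
definition diag_apply :: "('p::finite \<Rightarrow> real) \<Rightarrow> real^'p \<Rightarrow> real^'p" where
  "diag_apply d u = (\<chi> j. d j * u $ j)"

text \<open>Spectral norm of the principal submatrix \<open>(d_j)_{j \<in> S}\<close> of a diagonal matrix:
  the largest absolute value of a diagonal entry (0 for the empty submatrix).\<close>
definition diag_norm_on :: "'p set \<Rightarrow> ('p::finite \<Rightarrow> real) \<Rightarrow> real" where
  "diag_norm_on S d = Max (insert 0 ((\<lambda>j. \<bar>d j\<bar>) ` S))"

abbreviation diag_norm :: "('p::finite \<Rightarrow> real) \<Rightarrow> real" where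
  "diag_norm d \<equiv> diag_norm_on UNIV d"

definition enn_powr :: "ennreal \<Rightarrow> real \<Rightarrow> ennreal" where
  "enn_powr x r = (if x = \<infinity> then \<infinity> else ennreal (enn2real x powr r))"

definition UU :: "(real^'p) set \<Rightarrow> real^'p \<Rightarrow> ('p::finite \<Rightarrow> real) \<Rightarrow> (real^'p) set" where
  "UU \<Theta> \<theta>s a = {u. \<theta>s + diag_apply a u \<in> closure \<Theta>}"

text \<open>The random Hoelder-type constant \<open>c_{T,R}(\<omega>)\<close> (a supremum, possibly \<open>\<infinity>\<close>),
  for a fixed \<open>T\<close> and \<open>\<omega>\<close>: \<open>Hw = \<bbbH>_T(\<omega>,\<cdot>)\<close>, \<open>a\<close> = diagonal of \<open>a_T\<close>.\<close>
definition cTR :: "real \<Rightarrow> real \<Rightarrow> (real^'p) set \<Rightarrow> real^'p \<Rightarrow> ('p::finite \<Rightarrow> real)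
    \<Rightarrow> (real^'p \<Rightarrow> real) \<Rightarrow> real \<Rightarrow> ennreal" where
  "cTR q \<eta> \<Theta> \<theta>s a Hw R =
     (SUP (u, v) \<in> {(u, v). u \<in> UU \<Theta> \<theta>s a \<and> v \<in> UU \<Theta> \<theta>s a \<and> u \<noteq> v \<and>
                    norm (diag_apply a u) < R * diag_norm a powr (1 - \<eta>) \<and>
                    norm (diag_apply a v) < R * diag_norm a powr (1 - \<eta>)}.
        ennreal (\<bar>Hw (\<theta>s + diag_apply a u) - Hw (\<theta>s + diag_apply a v)\<bar> / norm (u - v) powr q))"

text \<open>Diagonal of \<open>G_T = a_T^{-1} \<tilde>a_T\<close> at \<open>\<omega>\<close>; only the entries \<open>j \<in> \<J>^{(0)}\<close> are used,
  where it equals \<open>(\<xi>_T^j)^{-1/q} / \<alpha>_T^j\<close>.\<close>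
definition Gdiag :: "real \<Rightarrow> (real^'p) \<Rightarrow> ('p::finite \<Rightarrow> real) \<Rightarrow> ('p \<Rightarrow> real) \<Rightarrow> 'p \<Rightarrow> real" where
  "Gdiag q \<theta>s a \<xi> j = (if \<theta>s $ j = 0 then (\<xi> j) powr (- 1 / q) / a j else 1)"

definition cT :: "'w measure \<Rightarrow> real \<Rightarrow> real \<Rightarrow> (real^'p) set \<Rightarrow> real^'p \<Rightarrow> ('p::finite \<Rightarrow> real)
    \<Rightarrow> ('w \<Rightarrow> real^'p \<Rightarrow> real) \<Rightarrow> ('w \<Rightarrow> 'p \<Rightarrow> real) \<Rightarrow> real \<Rightarrow> real \<Rightarrow> ennreal" where
  "cT M q \<eta> \<Theta> \<theta>s a H \<xi> m0 R =
     (\<integral>\<^sup>+ \<omega>. enn_powr (cTR q \<eta> \<Theta> \<theta>s a (H \<omega>) R) m0 *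
              ennreal (diag_norm_on {j. \<theta>s $ j = 0} (Gdiag q \<theta>s a (\<xi> \<omega>)) powr (q * m0)) \<partial>M)"

end

theory Submission
  imports Defs
begin


lemma powr_ge_self: "0 \<le> x \<Longrightarrow> x \<le> 1 \<Longrightarrow> 0 < q \<Longrightarrow> q \<le> 1 \<Longrightarrow> x \<le> x powr (q::real)"
proof -
  assume h: "0 \<le> x" "x \<le> 1" "0 < q" "q \<le> 1"
  show ?thesis
  proof (cases "x = 0")
    case True then show ?thesis by simp
  next
    case False
    then have "x powr 1 \<le> x powr q" using h by (intro powr_mono') auto
    then show ?thesis using False h by simp
  qed
qed

lemma powr_subadd: "0 \<le> a \<Longrightarrow> 0 \<le> b \<Longrightarrow> 0 < q \<Longrightarrow> q \<le> 1 \<Longrightarrow>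
   (a + b) powr (q::real) \<le> a powr q + b powr q"
proof -
  assume h: "0 \<le> a" "0 \<le> b" "0 < q" "q \<le> 1"
  show ?thesis
  proof (cases "a + b = 0")
    case True then show ?thesis using h by simp
  next
    case False
    then have s: "a + b > 0" using h by simp
    have "a powr q = (a + b) powr q * (a/(a+b)) powr q"
      using s h by (simp add: powr_mult[symmetric])
    also have "\<dots> \<ge> (a + b) powr q * (a/(a+b))"
      using s h by (intro mult_left_mono powr_ge_self) auto
    finally have 1: "(a + b) powr q * (a/(a+b)) \<le> a powr q" .
    have "b powr q = (a + b) powr q * (b/(a+b)) powr q"
      using s h by (simp add: powr_mult[symmetric])
    also have "\<dots> \<ge> (a + b) powr q * (b/(a+b))"
      using s h by (intro mult_left_mono powr_ge_self) auto
    finally have 2: "(a + b) powr q * (b/(a+b)) \<le> b powr q" .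
    have "(a + b) powr q = (a + b) powr q * (a/(a+b)) + (a + b) powr q * (b/(a+b))"
      using s by (simp add: distrib_left[symmetric] add_divide_distrib[symmetric])
    then show ?thesis using 1 2 by linarith
  qed
qed

lemma powr_sum_subadd:
  assumes "finite A" "\<And>i. i \<in> A \<Longrightarrow> 0 \<le> f i" "0 < q" "q \<le> (1::real)"
  shows "(sum f A) powr q \<le> (\<Sum>i\<in>A. f i powr q)"
  using assms
proof (induction A rule: finite_induct)
  case empty then show ?case by simp
next
  case (insert x F)
  have "sum f (insert x F) powr q = (f x + sum f F) powr q" using insert by simp
  also have "\<dots> \<le> f x powr q + sum f F powr q"
    using insert by (intro powr_subadd sum_nonneg) auto
  also have "\<dots> \<le> f x powr q + (\<Sum>i\<in>F. f i powr q)" using insert by auto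
  finally show ?case using insert by simp
qed

lemma norm_powr_le_sum:
  fixes x :: "real^'p::finite"
  assumes "0 < q" "q \<le> 1"
  shows "norm x powr q \<le> (\<Sum>j\<in>UNIV. \<bar>x$j\<bar> powr q)"
proof -
  have "norm x powr q \<le> (\<Sum>j\<in>UNIV. \<bar>x$j\<bar>) powr q"
    using assms by (intro powr_mono2 norm_le_l1_cart) auto
  also have "\<dots> \<le> (\<Sum>j\<in>UNIV. \<bar>x$j\<bar> powr q)"
    using assms by (intro powr_sum_subadd) auto
  finally show ?thesis .
qed

lemma markov_ind:
  assumes "S \<in> sets M" "\<And>w. w \<in> S \<Longrightarrow> ennreal t \<le> f w"
  shows "ennreal t * emeasure M S \<le> (\<integral>\<^sup>+ w. f w \<partial>M)"
proof -
  have "ennreal t * emeasure M S = (\<integral>\<^sup>+ w. ennreal t * indicator S w \<partial>M)"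
    using assms by (simp add: nn_integral_cmult_indicator)
  also have "\<dots> \<le> (\<integral>\<^sup>+ w. f w \<partial>M)"
    using assms by (intro nn_integral_mono) (auto simp: indicator_def)
  finally show ?thesis .
qed

lemma good_event:
  fixes \<Theta> :: "(real^'p::finite) set" and \<theta>s th :: "real^'p" and a xi :: "'p \<Rightarrow> real"
    and Hw :: "real^'p \<Rightarrow> real" and pen :: "real \<Rightarrow> real"
  assumes ball: "ball \<theta>s rho \<subseteq> \<Theta>"
    and a_nz: "\<And>j. a j \<noteq> 0" and xi_pos: "\<And>j. xi j > 0"
    and pen0: "pen 0 = 0" and pen_lb: "\<And>x. \<bar>x\<bar> < rho \<Longrightarrow> (lam/2) * \<bar>x\<bar> powr q \<le> pen x"
    and lam: "lam > 0" and q: "0 < q" "q \<le> 1" and m0: "m0 > 0"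
    and th_in: "th \<in> closure \<Theta>"
    and max: "\<And>\<theta>. \<theta> \<in> closure \<Theta> \<Longrightarrow> Hw \<theta> - (\<Sum>j\<in>UNIV. xi j * pen (\<theta> $ j))
                 \<le> Hw th - (\<Sum>j\<in>UNIV. xi j * pen (th $ j))"
    and n1: "norm (th - \<theta>s) < R * diag_norm a powr (1 - eta)"
    and n2: "norm (th - \<theta>s) < rho"
    and jz: "\<theta>s $ jz = 0" "th $ jz \<noteq> 0"
  shows "ennreal ((lam/2) powr m0) \<le> enn_powr (cTR q eta \<Theta> \<theta>s a Hw R) m0 *
           ennreal (diag_norm_on {j. \<theta>s $ j = 0} (Gdiag q \<theta>s a xi) powr (q * m0))"
proof -
  define G where "G = diag_norm_on {j. \<theta>s $ j = 0} (Gdiag q \<theta>s a xi)"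
  have Gj: "\<bar>Gdiag q \<theta>s a xi j\<bar> \<le> G" if "\<theta>s $ j = 0" for j
    unfolding G_def diag_norm_on_def using that by (intro Max_ge) auto
  have "\<bar>Gdiag q \<theta>s a xi jz\<bar> > 0"
    using jz a_nz[of jz] xi_pos[of jz] by (simp add: Gdiag_def abs_divide)
  with Gj[OF jz(1)] have Gpos: "G > 0" by linarith
  define tt where "tt = (\<chi> j. if \<theta>s $ j = 0 then 0 else th $ j)"
  define u where "u = (\<chi> j. (th $ j - \<theta>s $ j) / a j)"
  define v where "v = (\<chi> j. (tt $ j - \<theta>s $ j) / a j)"
  have du: "diag_apply a u = th - \<theta>s"
    using a_nz by (simp add: diag_apply_def u_def vec_eq_iff)
  have dv: "diag_apply a v = tt - \<theta>s"
    using a_nz by (simp add: diag_apply_def v_def vec_eq_iff)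
  have ntt: "norm (tt - \<theta>s) \<le> norm (th - \<theta>s)"
    by (rule norm_le_componentwise_cart) (simp add: tt_def)
  have "tt \<in> ball \<theta>s rho"
    using ntt n2 by (simp add: dist_norm norm_minus_commute)
  with ball have tt_in: "tt \<in> \<Theta>" by auto
  have uU: "u \<in> UU \<Theta> \<theta>s a" using du th_in by (simp add: UU_def)
  have vU: "v \<in> UU \<Theta> \<theta>s a" using dv tt_in closure_subset by (auto simp: UU_def)
  have uv_j: "(u - v) $ j = (if \<theta>s $ j = 0 then th $ j / a j else 0)" for j
    by (simp add: u_def v_def tt_def)
  have "(u - v) $ jz \<noteq> 0" using uv_j[of jz] jz a_nz by simp
  then have uv: "u \<noteq> v" by auto
  then have nuv: "norm (u - v) > 0" by simp
  define C where "C = cTR q eta \<Theta> \<theta>s a Hw R"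
  have supb: "ennreal (\<bar>Hw th - Hw tt\<bar> / norm (u - v) powr q) \<le> C"
  proof -
    have "ennreal (\<bar>Hw (\<theta>s + diag_apply a u) - Hw (\<theta>s + diag_apply a v)\<bar> / norm (u - v) powr q) \<le> C"
      unfolding C_def cTR_def
      by (rule SUP_upper2[of "(u, v)"]) (use uU vU uv du dv n1 ntt in auto)
    then show ?thesis using du dv by simp
  qed
  define Sp where "Sp = (\<Sum>j\<in>UNIV. if \<theta>s $ j = 0 then xi j * pen (th $ j) else 0)"
  define S where "S = (\<Sum>j\<in>UNIV. if \<theta>s $ j = 0 then xi j * \<bar>th $ j\<bar> powr q else 0)"
  have "(\<Sum>j\<in>UNIV. xi j * pen (th $ j)) - (\<Sum>j\<in>UNIV. xi j * pen (tt $ j)) = Sp"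
    unfolding Sp_def sum_subtractf[symmetric] by (intro sum.cong) (auto simp: tt_def pen0)
  moreover have "Hw tt - (\<Sum>j\<in>UNIV. xi j * pen (tt $ j)) \<le> Hw th - (\<Sum>j\<in>UNIV. xi j * pen (th $ j))"
    using max tt_in closure_subset by auto
  ultimately have Sp_le: "Sp \<le> \<bar>Hw th - Hw tt\<bar>" by linarith
  have lamS: "(lam/2) * S \<le> Sp"
    unfolding S_def Sp_def sum_distrib_left
  proof (intro sum_mono)
    fix j
    show "lam / 2 * (if \<theta>s $ j = 0 then xi j * \<bar>th $ j\<bar> powr q else 0)
          \<le> (if \<theta>s $ j = 0 then xi j * pen (th $ j) else 0)"
    proof (cases "\<theta>s $ j = 0")
      case True
      have "\<bar>th $ j\<bar> \<le> norm (th - \<theta>s)"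
        using component_le_norm_cart[of "th - \<theta>s" j] True by simp
      then have "(lam/2) * \<bar>th $ j\<bar> powr q \<le> pen (th $ j)" using n2 pen_lb by auto
      then have "xi j * ((lam/2) * \<bar>th $ j\<bar> powr q) \<le> xi j * pen (th $ j)"
        using xi_pos[of j] by (intro mult_left_mono) auto
      then show ?thesis using True by (simp add: algebra_simps)
    qed simp
  qed
  have Spos: "S > 0"
    unfolding S_def
  proof (rule sum_pos2[where i=jz])
    show "0 < (if \<theta>s $ jz = 0 then xi jz * \<bar>th $ jz\<bar> powr q else 0)"
      using jz xi_pos[of jz] by simp
    fix i show "0 \<le> (if \<theta>s $ i = 0 then xi i * \<bar>th $ i\<bar> powr q else 0)"
      using xi_pos[of i] by simp
  qed auto
  have nuv_le: "norm (u - v) powr q \<le> G powr q * S"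
  proof -
    have "norm (u - v) powr q \<le> (\<Sum>j\<in>UNIV. \<bar>(u - v) $ j\<bar> powr q)"
      using q by (rule norm_powr_le_sum)
    also have "\<dots> \<le> (\<Sum>j\<in>UNIV. G powr q * (if \<theta>s $ j = 0 then xi j * \<bar>th $ j\<bar> powr q else 0))"
    proof (intro sum_mono)
      fix j
      show "\<bar>(u - v) $ j\<bar> powr q \<le> G powr q * (if \<theta>s $ j = 0 then xi j * \<bar>th $ j\<bar> powr q else 0)"
      proof (cases "\<theta>s $ j = 0")
        case True
        have xa: "xi j > 0" "\<bar>a j\<bar> > 0" using xi_pos a_nz by auto
        have gq: "\<bar>Gdiag q \<theta>s a xi j\<bar> powr q = 1 / (xi j * \<bar>a j\<bar> powr q)"
        proof -
          have "\<bar>Gdiag q \<theta>s a xi j\<bar> powr q = (xi j powr (-1/q)) powr q / \<bar>a j\<bar> powr q"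
            using True xa by (simp add: Gdiag_def abs_divide powr_divide)
          also have "(xi j powr (-1/q)) powr q = xi j powr (-1)"
            using q by (simp add: powr_powr)
          also have "xi j powr (-1) = 1 / xi j" using xa by (simp add: powr_minus_divide)
          finally show ?thesis by simp
        qed
        have "\<bar>(u - v) $ j\<bar> powr q = \<bar>th $ j\<bar> powr q / \<bar>a j\<bar> powr q"
          using True uv_j[of j] by (simp add: abs_divide powr_divide del: vector_minus_component)
        also have "\<dots> = (xi j * \<bar>th $ j\<bar> powr q) * \<bar>Gdiag q \<theta>s a xi j\<bar> powr q"
          using xa by (simp add: gq field_simps)
        also have "\<dots> \<le> (xi j * \<bar>th $ j\<bar> powr q) * G powr q"
          using xa Gj[OF True] q by (intro mult_left_mono powr_mono2) auto
        finally show ?thesis using True by (simp add: mult.commute)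
      qed (use uv_j[of j] in \<open>simp del: vector_minus_component\<close>)
    qed
    also have "\<dots> = G powr q * S" unfolding S_def sum_distrib_left ..
    finally show ?thesis .
  qed
  show ?thesis
  proof (cases "C = \<infinity>")
    case True
    have "ennreal (G powr (q * m0)) \<noteq> 0" using Gpos by simp
    then have "enn_powr C m0 * ennreal (G powr (q * m0)) = \<infinity>"
      using True by (simp add: enn_powr_def ennreal_top_mult)
    then show ?thesis unfolding C_def G_def by simp
  next
    case False
    then obtain c where c: "C = ennreal c" "c \<ge> 0"
      by (cases C) (auto simp: top_unique)
    have "\<bar>Hw th - Hw tt\<bar> / norm (u - v) powr q \<le> c"
      using supb c by (simp add: ennreal_le_iff)
    then have H: "\<bar>Hw th - Hw tt\<bar> \<le> c * norm (u - v) powr q"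
      using nuv by (simp add: divide_le_eq)
    have "(lam/2) * S \<le> c * (G powr q * S)"
      using lamS Sp_le H nuv_le c(2) by (meson mult_left_mono order_trans)
    then have "lam/2 \<le> c * G powr q" using Spos
      by (metis mult.assoc mult_le_cancel_right_pos)
    then have "(lam/2) powr m0 \<le> (c * G powr q) powr m0"
      using lam m0 by (intro powr_mono2) auto
    also have "\<dots> = c powr m0 * G powr (q * m0)"
      using c Gpos by (simp add: powr_mult powr_powr)
    finally have "(lam/2) powr m0 \<le> c powr m0 * G powr (q * m0)" .
    moreover have "enn_powr C m0 * ennreal (G powr (q * m0)) = ennreal (c powr m0 * G powr (q * m0))"
      using c by (simp add: enn_powr_def ennreal_mult)
    ultimately show ?thesis unfolding C_def G_def by (metis ennreal_leI)
  qed
qed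

theorem corollary1:
  fixes M :: "'w measure"
    and \<Theta> :: "(real^'p::finite) set" and \<theta>s :: "real^'p"
    and TT :: "real set"
    and H :: "real \<Rightarrow> 'w \<Rightarrow> real^'p \<Rightarrow> real"
    and \<xi> :: "real \<Rightarrow> 'w \<Rightarrow> 'p \<Rightarrow> real"
    and pen :: "real \<Rightarrow> real"
    and \<alpha> :: "real \<Rightarrow> 'p \<Rightarrow> real"
    and \<theta>hat :: "real \<Rightarrow> 'w \<Rightarrow> real^'p"
    and q \<eta> m :: real
  assumes M: "prob_space M"
    and \<Theta>: "bounded \<Theta>" "open \<Theta>" "\<theta>s \<in> \<Theta>"
    and TT: "TT \<subseteq> {0..}" "\<forall>x. \<exists>T\<in>TT. x < T"
    and H_cont: "\<And>T \<omega>. T \<in> TT \<Longrightarrow> continuous_on (closure \<Theta>) (H T \<omega>)"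
    and H_meas: "\<And>T \<theta>. T \<in> TT \<Longrightarrow> \<theta> \<in> closure \<Theta> \<Longrightarrow> (\<lambda>\<omega>. H T \<omega> \<theta>) \<in> borel_measurable M"
    and \<xi>_pos: "\<And>T \<omega> j. T \<in> TT \<Longrightarrow> \<omega> \<in> space M \<Longrightarrow> \<xi> T \<omega> j > 0"
    and \<xi>_meas: "\<And>T j. T \<in> TT \<Longrightarrow> (\<lambda>\<omega>. \<xi> T \<omega> j) \<in> borel_measurable M"
    and pen: "\<And>x. pen x \<ge> 0" "pen 0 = 0"
    and \<theta>hat_meas: "\<And>T. T \<in> TT \<Longrightarrow> \<theta>hat T \<in> borel_measurable M"
    and \<theta>hat_in: "\<And>T \<omega>. T \<in> TT \<Longrightarrow> \<omega> \<in> space M \<Longrightarrow> \<theta>hat T \<omega> \<in> closure \<Theta>"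
    and \<theta>hat_max: "\<And>T \<omega> \<theta>. T \<in> TT \<Longrightarrow> \<omega> \<in> space M \<Longrightarrow> \<theta> \<in> closure \<Theta> \<Longrightarrow>
        H T \<omega> \<theta> - (\<Sum>j\<in>UNIV. \<xi> T \<omega> j * pen (\<theta> $ j))
          \<le> H T \<omega> (\<theta>hat T \<omega>) - (\<Sum>j\<in>UNIV. \<xi> T \<omega> j * pen (\<theta>hat T \<omega> $ j))"
    and \<alpha>_inv: "\<And>T j. T \<in> TT \<Longrightarrow> \<alpha> T j \<noteq> 0"
    and \<alpha>_lim: "((\<lambda>T. diag_norm (\<alpha> T)) \<longlongrightarrow> 0) (at_top \<sqinter> principal TT)"
    and q: "0 < q" "q \<le> 1"
    and \<eta>: "0 < \<eta>" "\<eta> \<le> 1"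
    and m: "0 < m"
    and moment: "(SUP T\<in>TT. \<integral>\<^sup>+ \<omega>. ennreal (norm (\<chi> j. (\<theta>hat T \<omega> $ j - \<theta>s $ j) / \<alpha> T j) powr m) \<partial>M) < \<infinity>"
    and A5: "\<exists>lam>0. ((\<lambda>x. pen x / \<bar>x\<bar> powr q) \<longlongrightarrow> lam) (at 0)"
  shows "\<forall>R>0. \<forall>m0>0. \<exists>D>0. \<forall>T\<in>TT.
           emeasure M {\<omega> \<in> space M. {j. \<theta>hat T \<omega> $ j = 0} \<noteq> {j. \<theta>s $ j = 0}}
             < ennreal D * (ennreal (diag_norm (\<alpha> T) powr (m * \<eta>))
                            + cT M q \<eta> \<Theta> \<theta>s (\<alpha> T) (H T) (\<xi> T) m0 R)"
proof (intro allI impI)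
  fix R m0 :: real assume R: "R > 0" and m0: "m0 > 0"
  interpret P: prob_space M by (rule M)
  define K where "K = (SUP T\<in>TT. \<integral>\<^sup>+ \<omega>. ennreal (norm (\<chi> j. (\<theta>hat T \<omega> $ j - \<theta>s $ j) / \<alpha> T j) powr m) \<partial>M)"
  define K0 where "K0 = enn2real K"
  have "K \<noteq> \<infinity>" using moment unfolding K_def by (rule less_imp_neq)
  then have K0: "K = ennreal K0" "K0 \<ge> 0" unfolding K0_def by (simp_all add: ennreal_enn2real_if)
  have momT: "(\<integral>\<^sup>+ \<omega>. ennreal (norm (\<chi> j. (\<theta>hat T \<omega> $ j - \<theta>s $ j) / \<alpha> T j) powr m) \<partial>M) \<le> ennreal K0"
    if "T \<in> TT" for T
  proof -
    have "(\<integral>\<^sup>+ \<omega>. ennreal (norm (\<chi> j. (\<theta>hat T \<omega> $ j - \<theta>s $ j) / \<alpha> T j) powr m) \<partial>M) \<le> K"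
      unfolding K_def using that by (rule SUP_upper)
    then show ?thesis using K0(1) by simp
  qed
  obtain r0 where r0: "r0 > 0" "ball \<theta>s r0 \<subseteq> \<Theta>"
    using \<Theta>(2,3) open_contains_ball by blast
  obtain lam where lam: "lam > 0" "((\<lambda>x. pen x / \<bar>x\<bar> powr q) \<longlongrightarrow> lam) (at 0)"
    using A5 by blast
  have "\<forall>\<^sub>F x in at 0. dist (pen x / \<bar>x\<bar> powr q) lam < lam/2"
    using lam tendstoD[of _ lam "at 0" "lam/2"] by auto
  then obtain \<delta> where \<delta>: "\<delta> > 0" "\<And>x. x \<noteq> 0 \<Longrightarrow> dist x 0 < \<delta> \<Longrightarrow> dist (pen x / \<bar>x\<bar> powr q) lam < lam/2"
    unfolding eventually_at by blast
  have pen_lb: "(lam/2) * \<bar>x\<bar> powr q \<le> pen x" if "\<bar>x\<bar> < \<delta>" for x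
  proof (cases "x = 0")
    case True then show ?thesis using pen by simp
  next
    case False
    then have "dist (pen x / \<bar>x\<bar> powr q) lam < lam/2" using \<delta> that by simp
    then have "lam/2 < pen x / \<bar>x\<bar> powr q" unfolding dist_real_def by arith
    moreover have "\<bar>x\<bar> powr q > 0" using False by simp
    ultimately show ?thesis by (simp add: pos_less_divide_eq less_imp_le)
  qed
  define \<mu> where "\<mu> = Min (insert 1 ((\<lambda>j. \<bar>\<theta>s $ j\<bar>) ` {j. \<theta>s $ j \<noteq> 0}))"
  have \<mu>pos: "\<mu> > 0" unfolding \<mu>_def by (subst Min_gr_iff) auto
  have \<mu>le: "\<mu> \<le> \<bar>\<theta>s $ j\<bar>" if "\<theta>s $ j \<noteq> 0" for j
    unfolding \<mu>_def using that by (intro Min_le) auto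
  define \<rho> where "\<rho> = min r0 (min \<delta> \<mu>)"
  have \<rho>: "\<rho> > 0" "\<rho> \<le> r0" "\<rho> \<le> \<delta>" "\<rho> \<le> \<mu>"
    using r0 \<delta> \<mu>pos unfolding \<rho>_def by auto
  define D1 where "D1 = K0 / R powr m + 1 + K0 / \<rho> powr m"
  define D2 where "D2 = (2/lam) powr m0"
  define D where "D = D1 + D2 + 1"
  have D1: "D1 \<ge> 0" using K0 R \<rho> unfolding D1_def by simp
  have D2: "D2 > 0" using lam unfolding D2_def by simp
  have Dpos: "D > 0" using D1 D2 unfolding D_def by simp
  show "\<exists>D>0. \<forall>T\<in>TT.
           emeasure M {\<omega> \<in> space M. {j. \<theta>hat T \<omega> $ j = 0} \<noteq> {j. \<theta>s $ j = 0}}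
             < ennreal D * (ennreal (diag_norm (\<alpha> T) powr (m * \<eta>))
                            + cT M q \<eta> \<Theta> \<theta>s (\<alpha> T) (H T) (\<xi> T) m0 R)"
  proof (intro exI[of _ D] conjI ballI Dpos)
    fix T assume T: "T \<in> TT"
    define a where "a = \<alpha> T"
    define na where "na = diag_norm a"
    have a_le: "\<bar>a j\<bar> \<le> na" for j unfolding na_def diag_norm_on_def by (intro Max_ge) auto
    have a_nz: "a j \<noteq> 0" for j using \<alpha>_inv T unfolding a_def by simp
    have na: "na > 0" using a_le[of undefined] a_nz[of undefined] by linarith
    define x where "x = na powr (m * \<eta>)"
    have x: "x > 0" unfolding x_def using na by simp
    define uh where "uh \<omega> = (\<chi> j. (\<theta>hat T \<omega> $ j - \<theta>s $ j) / a j)" for \<omega>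
    define nr where "nr \<omega> = norm (\<theta>hat T \<omega> - \<theta>s)" for \<omega>
    have nr_le: "nr \<omega> \<le> na * norm (uh \<omega>)" for \<omega>
    proof -
      have "nr \<omega> \<le> norm (na *\<^sub>R uh \<omega>)" unfolding nr_def
      proof (rule norm_le_componentwise_cart)
        fix j
        have "\<bar>\<theta>hat T \<omega> $ j - \<theta>s $ j\<bar> = \<bar>a j\<bar> * \<bar>uh \<omega> $ j\<bar>"
          using a_nz[of j] by (simp add: uh_def abs_divide)
        also have "\<dots> \<le> na * \<bar>uh \<omega> $ j\<bar>" using a_le[of j] by (intro mult_right_mono) auto
        finally show "norm ((\<theta>hat T \<omega> - \<theta>s) $ j) \<le> norm ((na *\<^sub>R uh \<omega>) $ j)"
          using na by (simp add: abs_mult)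
      qed
      then show ?thesis using na by simp
    qed
    have mom: "(\<integral>\<^sup>+ \<omega>. ennreal (norm (uh \<omega>) powr m) \<partial>M) \<le> ennreal K0"
      using momT[OF T] unfolding uh_def a_def .
    have nr_meas: "nr \<in> borel_measurable M" unfolding nr_def
      using \<theta>hat_meas[OF T] by measurable
    have comp_meas: "(\<lambda>\<omega>. \<theta>hat T \<omega> $ j) \<in> borel_measurable M" for j
    proof -
      have "(\<lambda>x::real^'p. x $ j) \<in> borel_measurable borel"
        by (intro borel_measurable_continuous_onI continuous_intros)
      from measurable_compose[OF \<theta>hat_meas[OF T] this] show ?thesis by (simp add: o_def)
    qed
    define E where "E = {\<omega> \<in> space M. {j. \<theta>hat T \<omega> $ j = 0} \<noteq> {j. \<theta>s $ j = 0}}"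
    define S1 where "S1 = {\<omega> \<in> space M. R * na powr (1 - \<eta>) \<le> nr \<omega>}"
    define S2 where "S2 = {\<omega> \<in> space M. \<rho> \<le> nr \<omega>}"
    define S3 where "S3 = (\<Union>j\<in>{j. \<theta>s $ j = 0}. {\<omega> \<in> space M. nr \<omega> < R * na powr (1 - \<eta>) \<and> nr \<omega> < \<rho> \<and> \<theta>hat T \<omega> $ j \<noteq> 0})"
    have S1m: "S1 \<in> sets M" unfolding S1_def using nr_meas by measurable
    have S2m: "S2 \<in> sets M" unfolding S2_def using nr_meas by measurable
    have S3m: "S3 \<in> sets M" unfolding S3_def
    proof (intro sets.finite_UN)
      fix j show "{\<omega> \<in> space M. nr \<omega> < R * na powr (1 - \<eta>) \<and> nr \<omega> < \<rho> \<and> \<theta>hat T \<omega> $ j \<noteq> 0} \<in> sets M"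
        using nr_meas comp_meas[of j] by measurable
    qed auto
    have ES: "E \<subseteq> S1 \<union> S2 \<union> S3"
    proof
      fix \<omega> assume w: "\<omega> \<in> E"
      show "\<omega> \<in> S1 \<union> S2 \<union> S3"
      proof (rule ccontr)
        assume nS: "\<omega> \<notin> S1 \<union> S2 \<union> S3"
        have wM: "\<omega> \<in> space M" using w E_def by auto
        have n2: "nr \<omega> < \<rho>" using nS wM S2_def by auto
        have n1: "nr \<omega> < R * na powr (1 - \<eta>)" using nS wM S1_def by auto
        have A: "\<theta>hat T \<omega> $ j = 0" if "\<theta>s $ j = 0" for j
          using nS wM n1 n2 that unfolding S3_def by auto
        have B: "\<theta>hat T \<omega> $ j \<noteq> 0" if "\<theta>s $ j \<noteq> 0" for j
        proof
          assume "\<theta>hat T \<omega> $ j = 0"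
          then have "\<bar>\<theta>s $ j\<bar> \<le> nr \<omega>"
            using component_le_norm_cart[of "\<theta>hat T \<omega> - \<theta>s" j] unfolding nr_def by simp
          then show False using \<mu>le[OF that] \<rho> n2 by linarith
        qed
        have "{j. \<theta>hat T \<omega> $ j = 0} = {j. \<theta>s $ j = 0}" using A B by blast
        then show False using w E_def by auto
      qed
    qed
    have "emeasure M E \<le> emeasure M (S1 \<union> S2 \<union> S3)"
      using ES S1m S2m S3m by (intro emeasure_mono) auto
    also have "\<dots> \<le> emeasure M (S1 \<union> S2) + emeasure M S3"
      using S1m S2m S3m by (intro emeasure_subadditive) auto
    also have "\<dots> \<le> emeasure M S1 + emeasure M S2 + emeasure M S3"
      using S1m S2m by (intro add_right_mono emeasure_subadditive) auto
    finally have Ele: "emeasure M E \<le> emeasure M S1 + emeasure M S2 + emeasure M S3" .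
    define t1 where "t1 = (R * na powr (- \<eta>)) powr m"
    have t1: "t1 > 0" unfolding t1_def using R na by simp
    have "ennreal t1 * emeasure M S1 \<le> ennreal K0"
    proof -
      have "ennreal t1 * emeasure M S1 \<le> (\<integral>\<^sup>+ \<omega>. ennreal (norm (uh \<omega>) powr m) \<partial>M)"
      proof (rule markov_ind[OF S1m])
        fix \<omega> assume "\<omega> \<in> S1"
        then have "R * na powr (1 - \<eta>) \<le> na * norm (uh \<omega>)"
          using nr_le[of \<omega>] unfolding S1_def by auto
        moreover have "na powr (1 - \<eta>) = na * na powr (- \<eta>)"
          using na powr_add[of na 1 "-\<eta>"] by simp
        ultimately have "R * na powr (- \<eta>) \<le> norm (uh \<omega>)"
          using na by (simp add: mult.left_commute)
        then show "ennreal t1 \<le> ennreal (norm (uh \<omega>) powr m)"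
          unfolding t1_def using R na m by (intro ennreal_leI powr_mono2) auto
      qed
      then show ?thesis using mom by simp
    qed
    then have "t1 * measure M S1 \<le> K0"
      using K0 t1 by (simp add: P.emeasure_eq_measure ennreal_mult[symmetric] ennreal_le_iff)
    then have m1: "measure M S1 \<le> K0 / R powr m * x"
    proof -
      assume h: "t1 * measure M S1 \<le> K0"
      have "t1 = R powr m / x" unfolding t1_def x_def using R na
        by (simp add: powr_mult powr_powr powr_minus inverse_powr divide_inverse mult.commute)
      then have e2: "R powr m = t1 * x" using x by simp
      have "measure M S1 * R powr m = t1 * measure M S1 * x" by (simp add: e2 algebra_simps)
      also have "\<dots> \<le> K0 * x" using h x by (intro mult_right_mono) auto
      finally have "measure M S1 * R powr m \<le> K0 * x" .
      then show ?thesis using R by (simp add: field_simps)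
    qed
    define t2 where "t2 = (\<rho> / na) powr m"
    have t2: "t2 > 0" unfolding t2_def using \<rho> na by simp
    have "ennreal t2 * emeasure M S2 \<le> ennreal K0"
    proof -
      have "ennreal t2 * emeasure M S2 \<le> (\<integral>\<^sup>+ \<omega>. ennreal (norm (uh \<omega>) powr m) \<partial>M)"
      proof (rule markov_ind[OF S2m])
        fix \<omega> assume "\<omega> \<in> S2"
        then have "\<rho> \<le> na * norm (uh \<omega>)"
          using nr_le[of \<omega>] unfolding S2_def by auto
        then have "\<rho> / na \<le> norm (uh \<omega>)" using na by (simp add: divide_le_eq mult.commute)
        then show "ennreal t2 \<le> ennreal (norm (uh \<omega>) powr m)"
          unfolding t2_def using \<rho> na m by (intro ennreal_leI powr_mono2) auto
      qed
      then show ?thesis using mom by simp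
    qed
    then have "t2 * measure M S2 \<le> K0"
      using K0 t2 by (simp add: P.emeasure_eq_measure ennreal_mult[symmetric] ennreal_le_iff)
    then have m2a: "measure M S2 \<le> K0 / \<rho> powr m * na powr m"
      using t2 \<rho> na by (simp add: t2_def powr_divide field_simps)
    have m2: "measure M S2 \<le> (1 + K0 / \<rho> powr m) * x"
    proof (cases "na \<le> 1")
      case True
      then have "na powr m \<le> x" unfolding x_def using na m \<eta>
        by (intro powr_mono') (auto simp: mult_le_cancel_left1)
      then have "K0 / \<rho> powr m * na powr m \<le> K0 / \<rho> powr m * x"
        using K0 \<rho> by (intro mult_left_mono) auto
      then show ?thesis using m2a x by (simp add: algebra_simps)
    next
      case False
      then have "1 \<le> x" unfolding x_def using m \<eta> by (intro ge_one_powr_ge_zero) auto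
      moreover have "measure M S2 \<le> 1" by simp
      moreover have "0 \<le> K0 / \<rho> powr m * x" using K0 x \<rho> by simp
      moreover have "(1 + K0 / \<rho> powr m) * x = x + K0 / \<rho> powr m * x" by (simp add: algebra_simps)
      ultimately show ?thesis by linarith
    qed
    define cTT where "cTT = cT M q \<eta> \<Theta> \<theta>s (\<alpha> T) (H T) (\<xi> T) m0 R"
    have "ennreal ((lam/2) powr m0) * emeasure M S3 \<le> cTT"
      unfolding cTT_def cT_def
    proof (rule markov_ind[OF S3m])
      fix \<omega> assume "\<omega> \<in> S3"
      then obtain j0 where j0: "\<theta>s $ j0 = 0" "\<theta>hat T \<omega> $ j0 \<noteq> 0" and wM: "\<omega> \<in> space M"
        and n1: "nr \<omega> < R * na powr (1 - \<eta>)" and n2: "nr \<omega> < \<rho>"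
        unfolding S3_def by auto
      show "ennreal ((lam / 2) powr m0) \<le> enn_powr (cTR q \<eta> \<Theta> \<theta>s (\<alpha> T) (H T \<omega>) R) m0 *
            ennreal (diag_norm_on {j. \<theta>s $ j = 0} (Gdiag q \<theta>s (\<alpha> T) (\<xi> T \<omega>)) powr (q * m0))"
      proof (rule good_event[where rho = \<rho> and th = "\<theta>hat T \<omega>" and jz = j0])
        show "ball \<theta>s \<rho> \<subseteq> \<Theta>" using r0 \<rho> by (meson order_trans subset_ball)
        show "\<alpha> T j \<noteq> 0" for j using \<alpha>_inv T by simp
        show "\<xi> T \<omega> j > 0" for j using \<xi>_pos T wM by simp
        show "lam / 2 * \<bar>x\<bar> powr q \<le> pen x" if "\<bar>x\<bar> < \<rho>" for x
          using pen_lb that \<rho> by simp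
        show "\<theta>hat T \<omega> \<in> closure \<Theta>" using \<theta>hat_in T wM by simp
        show "H T \<omega> \<theta> - (\<Sum>j\<in>UNIV. \<xi> T \<omega> j * pen (\<theta> $ j))
           \<le> H T \<omega> (\<theta>hat T \<omega>) - (\<Sum>j\<in>UNIV. \<xi> T \<omega> j * pen (\<theta>hat T \<omega> $ j))"
          if "\<theta> \<in> closure \<Theta>" for \<theta> using \<theta>hat_max T wM that by simp
        show "norm (\<theta>hat T \<omega> - \<theta>s) < R * diag_norm (\<alpha> T) powr (1 - \<eta>)"
          using n1 unfolding nr_def na_def a_def .
        show "norm (\<theta>hat T \<omega> - \<theta>s) < \<rho>" using n2 unfolding nr_def .
      qed (use pen lam q m0 j0 in auto)
    qed
    moreover have "emeasure M S3 = ennreal D2 * (ennreal ((lam/2) powr m0) * emeasure M S3)"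
    proof -
      have "D2 * (lam/2) powr m0 = 1" unfolding D2_def using lam
        by (simp add: powr_mult[symmetric])
      then have "ennreal D2 * ennreal ((lam/2) powr m0) = 1"
        using D2 by (simp add: ennreal_mult[symmetric])
      then show ?thesis by (simp add: mult.assoc[symmetric])
    qed
    ultimately have m3: "emeasure M S3 \<le> ennreal D2 * cTT"
      by (metis mult_left_mono zero_le)
    have goal: "emeasure M E < ennreal D * (ennreal x + cTT)"
    proof (cases "cTT = \<infinity>")
      case True
      have "emeasure M E \<le> 1" by (rule P.emeasure_le_1)
      also have "(1::ennreal) < \<infinity>" by simp
      also have "\<infinity> = ennreal D * (ennreal x + cTT)" using True Dpos by (simp add: ennreal_mult_top)
      finally show ?thesis .
    next
      case False
      then obtain y where y: "cTT = ennreal y" "y \<ge> 0" by (cases cTT) (auto simp: top_unique)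
      have p1: "measure M S1 \<ge> 0" "measure M S2 \<ge> 0" by auto
      have "emeasure M E \<le> emeasure M S1 + emeasure M S2 + ennreal D2 * ennreal y"
        using Ele m3 y by (metis add_left_mono order_trans)
      also have "\<dots> = ennreal (measure M S1 + measure M S2 + D2 * y)"
        using D2 y p1 by (simp add: P.emeasure_eq_measure ennreal_mult)
      also have "\<dots> < ennreal (D * (x + y))"
      proof (rule ennreal_lessI)
        have "measure M S1 + measure M S2 \<le> D1 * x"
          using m1 m2 unfolding D1_def by (simp add: algebra_simps)
        moreover have "D1 * x < (D1 + D2 + 1) * x" using x D2 by (simp add: mult_strict_right_mono)
        moreover have "D2 * y \<le> (D1 + D2 + 1) * y" using D1 y by (intro mult_right_mono) auto
        ultimately show "measure M S1 + measure M S2 + D2 * y < D * (x + y)"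
          unfolding D_def by (simp add: algebra_simps)
        show "0 < D * (x + y)" using Dpos x y by simp
      qed
      also have "ennreal (D * (x + y)) = ennreal D * (ennreal x + cTT)"
        using y x Dpos by (simp add: ennreal_mult)
      finally show ?thesis .
    qed
    then show "emeasure M {\<omega> \<in> space M. {j. \<theta>hat T \<omega> $ j = 0} \<noteq> {j. \<theta>s $ j = 0}}
             < ennreal D * (ennreal (diag_norm (\<alpha> T) powr (m * \<eta>))
                            + cT M q \<eta> \<Theta> \<theta>s (\<alpha> T) (H T) (\<xi> T) m0 R)"
      unfolding E_def x_def cTT_def na_def a_def .
  qed
qed

end
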